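(* In the link-cut tree data structure of Sleator and Tarjan (implemented with splay trees over preferred paths), every operation (link, cut, and queries, all implemented via expose together with $O(1)$ splay-tree concatenate/split operations) takes $O(D^2)$ worst-case time, where $D$ is the diameter of the represented input tree (the maximum number of edges on a simple path).
   Context: The link-cut tree represents a dynamic forest by decomposing each tree into vertex-disjoint preferred paths, each stored in a splay tree keyed by depth; the expose operation makes the path from a vertex to its tree root preferred via a sequence of splice, concatenate and split operations on these splay trees. *)

theory Defs
  imports Main "HOL-Library.Tree"
begin

text \<open>A splay tree stores the vertices of one preferred path, in-order = increasing depth.
  Splaying is by position (the node itself), using zig / zig-zig / zig-zag rotations.\<close>

fun splay :: "'a \<Rightarrow> 'a tree \<Rightarrow> 'a tree" where
  "splay x Leaf = Leaf"
| "splay x (Node l b r) =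
    (if x = b then Node l b r
     else if x \<in> set_tree l then
       (case l of Leaf \<Rightarrow> Node l b r
        | Node ll c lr \<Rightarrow>
            if x = c then Node ll c (Node lr b r)
            else if x \<in> set_tree ll then
              (case splay x ll of Leaf \<Rightarrow> Node l b r
               | Node t1 a t2 \<Rightarrow> Node t1 a (Node t2 c (Node lr b r)))
            else
              (case splay x lr of Leaf \<Rightarrow> Node l b r
               | Node t1 a t2 \<Rightarrow> Node (Node ll c t1) a (Node t2 b r)))
     else if x \<in> set_tree r then
       (case r of Leaf \<Rightarrow> Node l b r
        | Node rl c rr \<Rightarrow>
            if x = c then Node (Node l b rl) c rr
            else if x \<in> set_tree rr then
              (case splay x rr of Leaf \<Rightarrow> Node l b r
               | Node t1 a t2 \<Rightarrow> Node (Node (Node l b rl) c t1) a t2)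
            else
              (case splay x rl of Leaf \<Rightarrow> Node l b r
               | Node t1 a t2 \<Rightarrow> Node (Node l b t1) a (Node t2 c rr)))
     else Node l b r)"

fun node_depth :: "'a \<Rightarrow> 'a tree \<Rightarrow> nat" where
  "node_depth x Leaf = 0"
| "node_depth x (Node l b r) =
    (if x = b then 0 else if x \<in> set_tree l then Suc (node_depth x l) else Suc (node_depth x r))"

text \<open>Cost of splaying x: one unit per rotation (= depth of x) plus one unit of overhead.\<close>
definition splay_cost :: "'a \<Rightarrow> 'a tree \<Rightarrow> nat" where
  "splay_cost x t = node_depth x t + 1"

definition head :: "'a tree \<Rightarrow> 'a" where
  "head t = hd (inorder t)"

text \<open>A state: a set of splay trees (one per preferred path) and path-parent pointers,
  where \<open>pp v\<close> is meaningful when v is the head (shallowest vertex) of its path.\<close>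
record 'a lct =
  trees :: "'a tree set"
  pp :: "'a \<Rightarrow> 'a option"

definition nodes :: "'a lct \<Rightarrow> 'a set" where
  "nodes s = (\<Union>t\<in>trees s. set_tree t)"

definition tree_of :: "'a lct \<Rightarrow> 'a \<Rightarrow> 'a tree" where
  "tree_of s v = (THE t. t \<in> trees s \<and> v \<in> set_tree t)"

fun pred_in :: "'a list \<Rightarrow> 'a \<Rightarrow> 'a option" where
  "pred_in (u # w # ys) v = (if w = v then Some u else pred_in (w # ys) v)"
| "pred_in _ v = None"

definition rep_parent :: "'a lct \<Rightarrow> 'a \<Rightarrow> 'a option" where
  "rep_parent s v =
     (if v \<notin> nodes s then None
      else (case pred_in (inorder (tree_of s v)) v of Some u \<Rightarrow> Some u | None \<Rightarrow> pp s v))"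

definition parent_rel :: "'a lct \<Rightarrow> ('a \<times> 'a) set" where
  "parent_rel s = {(p, v). rep_parent s v = Some p}"

definition lct_inv :: "'a lct \<Rightarrow> bool" where
  "lct_inv s \<longleftrightarrow>
     finite (trees s) \<and> Leaf \<notin> trees s \<and>
     (\<forall>t\<in>trees s. distinct (inorder t)) \<and>
     (\<forall>t1\<in>trees s. \<forall>t2\<in>trees s. t1 \<noteq> t2 \<longrightarrow> set_tree t1 \<inter> set_tree t2 = {}) \<and>
     (\<forall>t\<in>trees s. \<forall>w. pp s (head t) = Some w \<longrightarrow> w \<in> nodes s) \<and>
     wf (parent_rel s)"

definition adj :: "'a lct \<Rightarrow> 'a \<Rightarrow> 'a \<Rightarrow> bool" where
  "adj s u v \<longleftrightarrow> rep_parent s u = Some v \<or> rep_parent s v = Some u"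

definition diam_le :: "'a lct \<Rightarrow> nat \<Rightarrow> bool" where
  "diam_le s D \<longleftrightarrow>
     (\<forall>xs. xs \<noteq> [] \<and> distinct xs \<and> successively (adj s) xs \<longrightarrow> length xs - 1 \<le> D)"

definition expose_start :: "'a lct \<Rightarrow> 'a \<Rightarrow> 'a lct \<times> nat" where
  "expose_start s v =
     (let t = tree_of s v in
      case splay v t of
        Leaf \<Rightarrow> (s, splay_cost v t + 1)
      | Node L x R \<Rightarrow>
          (s\<lparr> trees := (trees s - {t}) \<union> {Node L x Leaf} \<union> (if R = Leaf then {} else {R}),
              pp := (if R = Leaf then pp s else (pp s)(head R := Some x)) \<rparr>,
           splay_cost v t + 1))"

inductive expose_loop :: "'a lct \<Rightarrow> 'a \<Rightarrow> 'a lct \<Rightarrow> nat \<Rightarrow> bool" where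
  loop_done: "tv = tree_of s v \<Longrightarrow> pp s (head tv) = None \<Longrightarrow>
         expose_loop s v (s\<lparr> trees := (trees s - {tv}) \<union> {splay v tv} \<rparr>) (splay_cost v tv)"
| loop_step: "tv = tree_of s v \<Longrightarrow> pp s (head tv) = Some w \<Longrightarrow> tw = tree_of s w \<Longrightarrow>
         splay w tw = Node L' x R' \<Longrightarrow>
         s2 = s\<lparr> trees := (trees s - {tv, tw}) \<union> {Node L' x tv} \<union> (if R' = Leaf then {} else {R'}),
                 pp := (if R' = Leaf then pp s else (pp s)(head R' := Some x)) \<rparr> \<Longrightarrow>
         expose_loop s2 v s' c \<Longrightarrow>
         expose_loop s v s' (c + splay_cost w tw + 1)"

definition expose :: "'a lct \<Rightarrow> 'a \<Rightarrow> 'a lct \<Rightarrow> nat \<Rightarrow> bool" where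
  "expose s v s' c \<longleftrightarrow>
     (\<exists>c2. expose_loop (fst (expose_start s v)) v s' c2 \<and> c = snd (expose_start s v) + c2)"

datatype 'a lct_op = Link 'a 'a | Cut 'a | FindRoot 'a

fun op_pre :: "'a lct \<Rightarrow> 'a lct_op \<Rightarrow> bool" where
  "op_pre s (Link v w) \<longleftrightarrow> v \<in> nodes s \<and> w \<in> nodes s \<and> rep_parent s v = None \<and>
                            (v, w) \<notin> (parent_rel s)\<^sup>*"
| "op_pre s (Cut v) \<longleftrightarrow> v \<in> nodes s \<and> rep_parent s v \<noteq> None"
| "op_pre s (FindRoot v) \<longleftrightarrow> v \<in> nodes s"

inductive lct_step :: "'a lct \<Rightarrow> 'a lct_op \<Rightarrow> 'a lct \<Rightarrow> 'a option \<Rightarrow> nat \<Rightarrow> bool" where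
  link: "expose s v s1 c1 \<Longrightarrow> expose s1 w s2 c2 \<Longrightarrow>
         tree_of s2 v = Node Leaf x Rv \<Longrightarrow>
         s3 = s2\<lparr> trees := (trees s2 - {tree_of s2 v, tree_of s2 w}) \<union> {Node (tree_of s2 w) x Rv} \<rparr> \<Longrightarrow>
         lct_step s (Link v w) s3 None (c1 + c2 + 1)"
| cut: "expose s v s1 c1 \<Longrightarrow> tree_of s1 v = Node L x R \<Longrightarrow>
        s2 = s1\<lparr> trees := (trees s1 - {tree_of s1 v}) \<union> {Node Leaf x R} \<union> (if L = Leaf then {} else {L}),
                 pp := (pp s1)(x := None) \<rparr> \<Longrightarrow>
        lct_step s (Cut v) s2 None (c1 + 1)"
| findroot: "expose s v s1 c1 \<Longrightarrow> tv = tree_of s1 v \<Longrightarrow> r = head tv \<Longrightarrow>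
        s2 = s1\<lparr> trees := (trees s1 - {tv}) \<union> {splay r tv} \<rparr> \<Longrightarrow>
        lct_step s (FindRoot v) s2 (Some r) (c1 + node_depth r tv + 1 + splay_cost r tv)"

end

theory Submission
  imports Defs
begin

lemma inorder_splay[simp]: "inorder (splay x t) = inorder t"
proof (induction x t rule: splay.induct)
  case (2 x l b r)
  show ?case
  proof (cases "x = b")
    case nb: False
    show ?thesis
    proof (cases "x \<in> set_tree l")
      case xl: True
      then obtain ll c lr where l: "l = Node ll c lr" by (cases l) auto
      show ?thesis
      proof (cases "x = c")
        case nc: False
        show ?thesis
        proof (cases "x \<in> set_tree ll")
          case True
          note IH = 2(1)[OF nb xl l nc True]
          show ?thesis using nb xl l nc True IH by (cases "splay x ll") auto
        next
          case False
          note IH = 2(2)[OF nb xl l nc False]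
          show ?thesis using nb xl l nc False IH by (cases "splay x lr") auto
        qed
      qed (use nb xl l in simp)
    next
      case xnl: False
      show ?thesis
      proof (cases "x \<in> set_tree r")
        case xr: True
        then obtain rl c rr where r: "r = Node rl c rr" by (cases r) auto
        show ?thesis
        proof (cases "x = c")
          case nc: False
          show ?thesis
          proof (cases "x \<in> set_tree rr")
            case True
            note IH = 2(3)[OF nb xnl xr r nc True]
            show ?thesis using nb xnl xr r nc True IH by (cases "splay x rr") auto
          next
            case False
            note IH = 2(4)[OF nb xnl xr r nc False]
            show ?thesis using nb xnl xr r nc False IH by (cases "splay x rl") auto
          qed
        qed (use nb xnl xr r in simp)
      qed (use nb xnl in simp)
    qed
  qed simp
qed simp
lemma set_splay[simp]: "set_tree (splay x t) = set_tree t"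
  by (metis inorder_splay set_inorder)

lemma splay_root: "x \<in> set_tree t \<Longrightarrow> \<exists>l r. splay x t = Node l x r"
proof (induction x t rule: splay.induct)
  case (1 x)
  then show ?case by simp
next
  case (2 x l b r)
  show ?case
  proof (cases "x = b")
    case True then show ?thesis by simp
  next
    case nb: False
    show ?thesis
    proof (cases "x \<in> set_tree l")
      case xl: True
      then obtain ll c lr where l: "l = Node ll c lr" by (cases l) auto
      show ?thesis
      proof (cases "x = c")
        case True then show ?thesis using nb xl l by simp
      next
        case nc: False
        show ?thesis
        proof (cases "x \<in> set_tree ll")
          case True
          with 2(1)[OF nb xl l nc True] obtain t1 t2 where "splay x ll = Node t1 x t2" by blast
          then show ?thesis using nb xl l nc True by simp
        next
          case False
          with xl l nc have xlr: "x \<in> set_tree lr" by simp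
          with 2(2)[OF nb xl l nc False] obtain t1 t2 where "splay x lr = Node t1 x t2" by blast
          then show ?thesis using nb xl l nc False by simp
        qed
      qed
    next
      case xnl: False
      with 2 nb have xr: "x \<in> set_tree r" by simp
      then obtain rl c rr where r: "r = Node rl c rr" by (cases r) auto
      show ?thesis
      proof (cases "x = c")
        case True then show ?thesis using nb xnl xr r by simp
      next
        case nc: False
        show ?thesis
        proof (cases "x \<in> set_tree rr")
          case True
          with 2(3)[OF nb xnl xr r nc True] obtain t1 t2 where "splay x rr = Node t1 x t2" by blast
          then show ?thesis using nb xnl xr r nc True by simp
        next
          case False
          with xr r nc have "x \<in> set_tree rl" by simp
          with 2(4)[OF nb xnl xr r nc False] obtain t1 t2 where "splay x rl = Node t1 x t2" by blast
          then show ?thesis using nb xnl xr r nc False by simp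
        qed
      qed
    qed
  qed
qed

lemma node_depth_le: "node_depth x t \<le> size t"
  by (induction t) auto

fun edges :: "'a list \<Rightarrow> ('a \<times> 'a) set" where
  "edges (a # b # l) = insert (a, b) (edges (b # l))"
| "edges _ = {}"

lemma edges_append: "edges (xs @ ys) = edges xs \<union> edges ys \<union>
   (if xs \<noteq> [] \<and> ys \<noteq> [] then {(last xs, hd ys)} else {})"
  by (induction xs rule: edges.induct) (cases ys; auto)+

lemma edges_Cons: "edges (a # l) = edges l \<union> (if l = [] then {} else {(a, hd l)})"
  by (cases l) auto

lemma edges_set: "(a, b) \<in> edges l \<Longrightarrow> a \<in> set l \<and> b \<in> set l"
  by (induction l rule: edges.induct) auto

lemma edges_nth: "Suc k < length l \<Longrightarrow> (l ! k, l ! Suc k) \<in> edges l"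
proof (induction l arbitrary: k rule: edges.induct)
  case (1 a b l)
  then show ?case by (cases k) auto
qed auto

lemma edges_succ: "(\<And>a b. (a, b) \<in> edges l \<Longrightarrow> P a b) \<Longrightarrow> successively P l"
  by (induction l rule: edges.induct) auto

lemma edges_chain: "edges l \<subseteq> r \<Longrightarrow> i < j \<Longrightarrow> j < length l \<Longrightarrow> (l ! i, l ! j) \<in> r\<^sup>+"
proof (induction j)
  case 0 then show ?case by simp
next
  case (Suc j)
  have e: "(l ! j, l ! Suc j) \<in> r" using edges_nth[of j l] Suc.prems by auto
  show ?case
  proof (cases "i = j")
    case True then show ?thesis using e by auto
  next
    case False
    then have "(l ! i, l ! j) \<in> r\<^sup>+" using Suc by auto
    then show ?thesis using e by auto
  qed
qed

lemma pred_in_Some: "pred_in l v = Some u \<Longrightarrow> (u, v) \<in> edges l"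
  by (induction l v rule: pred_in.induct) (auto split: if_splits)

lemma pred_in_None: "v \<in> set l \<Longrightarrow> pred_in l v = None \<Longrightarrow> v = hd l"
  by (induction l v rule: pred_in.induct) (auto split: if_splits)

lemma pred_in_notl: "v \<notin> set (tl l) \<Longrightarrow> pred_in l v = None"
  by (induction l v rule: pred_in.induct) (auto split: if_splits)

lemma edges_snd: "(a, b) \<in> edges l \<Longrightarrow> b \<in> set (tl l)"
  by (induction l rule: edges.induct) auto

lemma pred_in_edge: "distinct l \<Longrightarrow> (u, v) \<in> edges l \<Longrightarrow> pred_in l v = Some u"
proof (induction l v rule: pred_in.induct)
  case (1 a b ys v)
  show ?case
  proof (cases "b = v")
    case True
    then have "(u, v) = (a, b)"
      using 1(2,3) edges_set[of u v "b # ys"] edges_snd[of u v "b # ys"] by auto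
    then show ?thesis using True by simp
  next
    case False
    then show ?thesis using 1 by auto
  qed
qed auto

definition ppe :: "('a \<Rightarrow> 'a option) \<Rightarrow> 'a \<Rightarrow> ('a \<times> 'a) set" where
  "ppe p h = (case p h of None \<Rightarrow> {} | Some u \<Rightarrow> {(u, h)})"

definition tedges :: "('a \<Rightarrow> 'a option) \<Rightarrow> 'a tree \<Rightarrow> ('a \<times> 'a) set" where
  "tedges p t = edges (inorder t) \<union> ppe p (head t)"

definition G :: "'a lct \<Rightarrow> ('a \<times> 'a) set" where
  "G s = (\<Union>t\<in>trees s. tedges (pp s) t)"

definition struct_ok :: "'a lct \<Rightarrow> bool" where
  "struct_ok s \<longleftrightarrow> finite (trees s) \<and> Leaf \<notin> trees s \<and>
     (\<forall>t\<in>trees s. distinct (inorder t)) \<and>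
     (\<forall>t1\<in>trees s. \<forall>t2\<in>trees s. t1 \<noteq> t2 \<longrightarrow> set_tree t1 \<inter> set_tree t2 = {})"

lemma lct_inv_struct: "lct_inv s \<Longrightarrow> struct_ok s"
  unfolding lct_inv_def struct_ok_def by blast

lemma tree_of_eq: "struct_ok s \<Longrightarrow> t \<in> trees s \<Longrightarrow> v \<in> set_tree t \<Longrightarrow> tree_of s v = t"
  unfolding tree_of_def struct_ok_def by (rule the_equality) blast+

lemma tree_of_in: "struct_ok s \<Longrightarrow> v \<in> nodes s \<Longrightarrow> tree_of s v \<in> trees s \<and> v \<in> set_tree (tree_of s v)"
  unfolding nodes_def using tree_of_eq by fastforce

lemma head_in: "t \<noteq> Leaf \<Longrightarrow> head t \<in> set_tree t"
  unfolding head_def by (metis eq_inorder_Nil list.set_sel(1) set_inorder)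

lemma rep_parent_G: "struct_ok s \<Longrightarrow> rep_parent s v = Some u \<longleftrightarrow> (u, v) \<in> G s"
proof
  assume ok: "struct_ok s" and rp: "rep_parent s v = Some u"
  then have vn: "v \<in> nodes s" unfolding rep_parent_def by (auto split: if_splits)
  define t where "t = tree_of s v"
  have t: "t \<in> trees s" "v \<in> set_tree t" using tree_of_in[OF ok vn] t_def by auto
  show "(u, v) \<in> G s"
  proof (cases "pred_in (inorder t) v")
    case None
    then have "pp s v = Some u" using rp vn t_def unfolding rep_parent_def by simp
    moreover have "v = head t" using pred_in_None[of v "inorder t"] None t unfolding head_def by simp
    ultimately show ?thesis using t unfolding G_def tedges_def ppe_def by force
  next
    case (Some a)
    then have "a = u" using rp vn t_def unfolding rep_parent_def by simp
    then show ?thesis using pred_in_Some[OF Some] t unfolding G_def tedges_def by blast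
  qed
next
  assume ok: "struct_ok s" and g: "(u, v) \<in> G s"
  then obtain t where t: "t \<in> trees s" "(u, v) \<in> tedges (pp s) t" unfolding G_def by blast
  have d: "distinct (inorder t)" and nl: "t \<noteq> Leaf" using ok t unfolding struct_ok_def by auto
  show "rep_parent s v = Some u"
  proof (cases "(u, v) \<in> edges (inorder t)")
    case True
    then have vt: "v \<in> set_tree t" using edges_set by fastforce
    then have "v \<in> nodes s" using t unfolding nodes_def by blast
    then show ?thesis using pred_in_edge[OF d True] tree_of_eq[OF ok t(1) vt]
      unfolding rep_parent_def by simp
  next
    case False
    then have "(u, v) \<in> ppe (pp s) (head t)" using t unfolding tedges_def by blast
    then have v: "v = head t" "pp s (head t) = Some u" unfolding ppe_def by (auto split: option.splits)
    have vt: "v \<in> set_tree t" using v head_in nl by auto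
    then have "v \<in> nodes s" using t unfolding nodes_def by blast
    moreover have "pred_in (inorder t) v = None"
      using d v nl by (intro pred_in_notl) (cases "inorder t"; auto simp: head_def)
    ultimately show ?thesis using v tree_of_eq[OF ok t(1) vt] unfolding rep_parent_def by simp
  qed
qed

lemma rep_parent_eq: "struct_ok s \<Longrightarrow> struct_ok s' \<Longrightarrow> G s' = G s \<Longrightarrow> rep_parent s' = rep_parent s"
proof
  fix v assume a: "struct_ok s" "struct_ok s'" "G s' = G s"
  show "rep_parent s' v = rep_parent s v"
    using rep_parent_G[OF a(1), of v] rep_parent_G[OF a(2), of v] a(3)
    by (cases "rep_parent s' v"; cases "rep_parent s v") auto
qed

lemma rep_parent_node: "lct_inv s \<Longrightarrow> rep_parent s h = Some u \<Longrightarrow> u \<in> nodes s"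
proof -
  assume inv: "lct_inv s" and rp: "rep_parent s h = Some u"
  have ok: "struct_ok s" using inv by (rule lct_inv_struct)
  have "(u, h) \<in> G s" using rep_parent_G[OF ok] rp by simp
  then obtain t where t: "t \<in> trees s" "(u, h) \<in> tedges (pp s) t"
    unfolding G_def by blast
  show ?thesis
  proof (cases "(u, h) \<in> edges (inorder t)")
    case True then show ?thesis using edges_set t unfolding nodes_def by fastforce
  next
    case False
    then have "pp s (head t) = Some u" using t unfolding tedges_def ppe_def by (auto split: option.splits)
    moreover have "\<forall>t\<in>trees s. \<forall>w. pp s (head t) = Some w \<longrightarrow> w \<in> nodes s"
      using inv unfolding lct_inv_def by simp
    ultimately show ?thesis using t by blast
  qed
qed

lemma parent_rel_eq: "rep_parent s' = rep_parent s \<Longrightarrow> parent_rel s' = parent_rel s"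
  unfolding parent_rel_def by simp

lemma diam_eq: "rep_parent s' = rep_parent s \<Longrightarrow> diam_le s' D = diam_le s D"
proof -
  assume "rep_parent s' = rep_parent s"
  then have "adj s' = adj s" unfolding adj_def by (intro ext) simp
  then show ?thesis unfolding diam_le_def by simp
qed

lemma transfer:
  assumes inv: "lct_inv s" and ok': "struct_ok s'" and n: "nodes s' = nodes s" and g: "G s' = G s"
  shows "lct_inv s' \<and> rep_parent s' = rep_parent s"
proof -
  have ok: "struct_ok s" using inv by (rule lct_inv_struct)
  have rp: "rep_parent s' = rep_parent s" using rep_parent_eq[OF ok ok' g] .
  have "\<forall>t\<in>trees s'. \<forall>w. pp s' (head t) = Some w \<longrightarrow> w \<in> nodes s'"
  proof (intro ballI allI impI)
    fix t w assume t: "t \<in> trees s'" "pp s' (head t) = Some w"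
    then have "(w, head t) \<in> G s'" unfolding G_def tedges_def ppe_def by force
    then have "rep_parent s (head t) = Some w" using rep_parent_G[OF ok'] rp by simp
    then show "w \<in> nodes s'" using rep_parent_node[OF inv] n by simp
  qed
  moreover have "wf (parent_rel s')" using inv parent_rel_eq[OF rp] unfolding lct_inv_def by simp
  ultimately have "lct_inv s'" using ok' unfolding lct_inv_def struct_ok_def by blast
  then show ?thesis using rp by simp
qed

lemma nodes_G_le:
  assumes ok: "struct_ok s" and d: "diam_le s D" and t: "t \<in> trees s"
  shows "size t \<le> D + 1"
proof -
  have "successively (adj s) (inorder t)"
  proof (rule edges_succ)
    fix a b assume "(a, b) \<in> edges (inorder t)"
    then have "(a, b) \<in> G s" using t unfolding G_def tedges_def by blast
    then show "adj s a b" using rep_parent_G[OF ok] unfolding adj_def by blast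
  qed
  moreover have "inorder t \<noteq> []" "distinct (inorder t)" using ok t unfolding struct_ok_def by auto
  ultimately have "length (inorder t) - 1 \<le> D" using d[unfolded diam_le_def, rule_format, of "inorder t"] by simp
  then show ?thesis by simp
qed

lemma chain_tree:
  assumes ok: "struct_ok s" and t: "t \<in> trees s" and i: "i < j" "j < length (inorder t)"
  shows "(inorder t ! i, inorder t ! j) \<in> (parent_rel s)\<^sup>+"
proof (rule edges_chain[OF _ i])
  show "edges (inorder t) \<subseteq> parent_rel s"
  proof
    fix e assume "e \<in> edges (inorder t)"
    then have "e \<in> G s" using t unfolding G_def tedges_def by blast
    then show "e \<in> parent_rel s" using rep_parent_G[OF ok] unfolding parent_rel_def by (cases e) auto
  qed
qed

lemma head_anc:
  assumes ok: "struct_ok s" and t: "t \<in> trees s" and z: "z \<in> set_tree t"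
  shows "(head t, z) \<in> (parent_rel s)\<^sup>*"
proof -
  obtain j where j: "j < length (inorder t)" "inorder t ! j = z"
    using z by (metis in_set_conv_nth set_inorder)
  have h: "head t = inorder t ! 0" using j unfolding head_def by (cases "inorder t") auto
  show ?thesis
  proof (cases "j = 0")
    case True then show ?thesis using h j by simp
  next
    case False
    then show ?thesis using chain_tree[OF ok t _ j(1), of 0] h j by auto
  qed
qed

lemma replace:
  assumes ok: "struct_ok s" and Os: "Os \<subseteq> trees s" and fN: "finite N" and nl: "Leaf \<notin> N"
    and dN: "\<forall>t\<in>N. distinct (inorder t)"
    and djN: "\<forall>t1\<in>N. \<forall>t2\<in>N. t1 \<noteq> t2 \<longrightarrow> set_tree t1 \<inter> set_tree t2 = {}"
    and sets: "(\<Union>t\<in>N. set_tree t) = (\<Union>t\<in>Os. set_tree t)"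
    and ppk: "\<forall>t\<in>trees s - Os. pp s' (head t) = pp s (head t)"
    and E: "(\<Union>t\<in>N. tedges (pp s') t) = (\<Union>t\<in>Os. tedges (pp s) t)"
    and tr: "trees s' = (trees s - Os) \<union> N"
  shows "struct_ok s' \<and> nodes s' = nodes s \<and> G s' = G s"
proof (intro conjI)
  have okd: "finite (trees s)" "Leaf \<notin> trees s" "\<forall>t\<in>trees s. distinct (inorder t)"
    "\<forall>t1\<in>trees s. \<forall>t2\<in>trees s. t1 \<noteq> t2 \<longrightarrow> set_tree t1 \<inter> set_tree t2 = {}"
    using ok unfolding struct_ok_def by auto
  have mix: "set_tree t1 \<inter> set_tree t2 = {}" if "t1 \<in> N" "t2 \<in> trees s - Os" for t1 t2
  proof (rule ccontr)
    assume "set_tree t1 \<inter> set_tree t2 \<noteq> {}"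
    then obtain y where y: "y \<in> set_tree t1" "y \<in> set_tree t2" by blast
    then have "y \<in> (\<Union>t\<in>Os. set_tree t)" using sets that(1) by blast
    then obtain q where q: "q \<in> Os" "y \<in> set_tree q" by blast
    then have "q \<noteq> t2" "q \<in> trees s" using that(2) Os by auto
    then have "set_tree q \<inter> set_tree t2 = {}" using okd(4) that(2) by blast
    then show False using q y by blast
  qed
  show "struct_ok s'" unfolding struct_ok_def tr
  proof (intro conjI ballI impI)
    show "finite (trees s - Os \<union> N)" using okd(1) fN by simp
    show "Leaf \<notin> trees s - Os \<union> N" using okd(2) nl by simp
    show "distinct (inorder t)" if "t \<in> trees s - Os \<union> N" for t using that okd(3) dN by blast
    show "set_tree t1 \<inter> set_tree t2 = {}" if h1: "t1 \<in> trees s - Os \<union> N" and h2: "t2 \<in> trees s - Os \<union> N" and h3: "t1 \<noteq> t2" for t1 t2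
    proof -
      consider "t1 \<in> N" "t2 \<in> N" | "t1 \<in> N" "t2 \<in> trees s - Os" | "t1 \<in> trees s - Os" "t2 \<in> N"
        | "t1 \<in> trees s - Os" "t2 \<in> trees s - Os" using h1 h2 by blast
      then show ?thesis
      proof cases
        case 1 then show ?thesis using djN h3 by blast
      next
        case 2 then show ?thesis using mix by blast
      next
        case 3 then show ?thesis using mix[of t2 t1] by blast
      next
        case 4 then show ?thesis using okd(4) h3 by blast
      qed
    qed
  qed
  have "nodes s' = (\<Union>t\<in>trees s - Os. set_tree t) \<union> (\<Union>t\<in>N. set_tree t)"
    unfolding nodes_def tr by (rule UN_Un)
  also have "\<dots> = (\<Union>t\<in>trees s - Os. set_tree t) \<union> (\<Union>t\<in>Os. set_tree t)" using sets by simp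
  also have "\<dots> = (\<Union>t\<in>(trees s - Os) \<union> Os. set_tree t)" by (rule UN_Un[symmetric])
  also have "(trees s - Os) \<union> Os = trees s" using Os by blast
  finally show "nodes s' = nodes s" unfolding nodes_def .
  have te: "tedges (pp s') t = tedges (pp s) t" if "t \<in> trees s - Os" for t
    using ppk that unfolding tedges_def ppe_def by simp
  have "G s' = (\<Union>t\<in>trees s - Os. tedges (pp s') t) \<union> (\<Union>t\<in>N. tedges (pp s') t)"
    unfolding G_def tr by (rule UN_Un)
  also have "\<dots> = (\<Union>t\<in>trees s - Os. tedges (pp s) t) \<union> (\<Union>t\<in>Os. tedges (pp s) t)"
    using te E by simp
  also have "\<dots> = (\<Union>t\<in>(trees s - Os) \<union> Os. tedges (pp s) t)" by (rule UN_Un[symmetric])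
  also have "(trees s - Os) \<union> Os = trees s" using Os by blast
  finally show "G s' = G s" unfolding G_def .
qed

lemma tedges_inorder: "inorder t1 = inorder t2 \<Longrightarrow> tedges p t1 = tedges p t2"
  unfolding tedges_def head_def by simp

lemma head_eq: "head t = hd (inorder t)" unfolding head_def ..

lemma split_ok:
  assumes inv: "lct_inv s" and t: "t \<in> trees s" and sp: "splay v t = Node L x R"
    and s': "s' = s\<lparr> trees := (trees s - {t}) \<union> {Node L x Leaf} \<union> (if R = Leaf then {} else {R}),
              pp := (if R = Leaf then pp s else (pp s)(head R := Some x)) \<rparr>"
  shows "lct_inv s' \<and> rep_parent s' = rep_parent s \<and> nodes s' = nodes s \<and>
         trees s - {t} \<subseteq> trees s' \<and> Node L x Leaf \<in> trees s'"
proof -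
  have ok: "struct_ok s" using inv by (rule lct_inv_struct)
  have io: "inorder t = inorder L @ x # inorder R" using inorder_splay[of v t] sp by simp
  have dt: "distinct (inorder t)" using ok t unfolding struct_ok_def by auto
  have okd: "\<forall>t1\<in>trees s. \<forall>t2\<in>trees s. t1 \<noteq> t2 \<longrightarrow> set_tree t1 \<inter> set_tree t2 = {}"
    using ok unfolding struct_ok_def by auto
  have tr': "trees s' = (trees s - {t}) \<union> {Node L x Leaf} \<union> (if R = Leaf then {} else {R})"
    using s' by simp
  have pp'0: "pp s' = (if R = Leaf then pp s else (pp s)(head R := Some x))"
    using s' by simp
  have G': "struct_ok s' \<and> nodes s' = nodes s \<and> G s' = G s"
  proof (cases "R = Leaf")
    case True
    have pp': "pp s' = pp s" using pp'0 True by simp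
    have ioN: "inorder (Node L x Leaf) = inorder t" using io True by simp
    show ?thesis
    proof (rule replace[OF ok, of "{t}" "{Node L x Leaf}"])
      show "(\<Union>t\<in>{Node L x Leaf}. tedges (pp s') t) = (\<Union>t\<in>{t}. tedges (pp s) t)"
        using pp' tedges_inorder[OF ioN] by simp
      show "(\<Union>t\<in>{Node L x Leaf}. set_tree t) = (\<Union>t\<in>{t}. set_tree t)"
        using ioN by (metis SUP_insert Sup_empty image_empty set_inorder sup_bot.right_neutral)
      show "trees s' = trees s - {t} \<union> {Node L x Leaf}" using tr' True by simp
      show "\<forall>t\<in>{Node L x Leaf}. distinct (inorder t)" using ioN dt by simp
      show "\<forall>t\<in>trees s - {t}. pp s' (head t) = pp s (head t)" using pp' by simp
    qed (use t in simp_all)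
  next
    case False
    let ?A = "inorder L" and ?B = "inorder R"
    have Bne: "?B \<noteq> []" using False by simp
    have hR: "head R = hd ?B" by (simp add: head_eq)
    have hL: "head (Node L x Leaf) = head t" using io by (simp add: head_eq hd_append)
    have hB: "hd ?B \<in> set ?B" using hd_in_set[OF Bne] .
    have hne: "head t \<noteq> head R"
      using dt io hB hR by (cases ?A) (auto simp: head_eq)
    have pp': "pp s' = (pp s)(head R := Some x)" using pp'0 False by simp
    show ?thesis
    proof (rule replace[OF ok, of "{t}" "{Node L x Leaf, R}"])
      show "trees s' = trees s - {t} \<union> {Node L x Leaf, R}" using tr' False by (simp add: insert_commute)
      show "\<forall>t2\<in>trees s - {t}. pp s' (head t2) = pp s (head t2)"
      proof
        fix t2 assume t2: "t2 \<in> trees s - {t}"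
        have "Leaf \<notin> trees s" using ok unfolding struct_ok_def by simp
        then have "t2 \<noteq> Leaf" using t2 by auto
        then have "head t2 \<in> set_tree t2" by (rule head_in)
        moreover have "head R \<in> set_tree t" using head_in[OF False] io by (simp flip: set_inorder)
        moreover have "set_tree t2 \<inter> set_tree t = {}"
        proof -
          have "t2 \<in> trees s" "t2 \<noteq> t" using t2 by simp_all
          then show ?thesis using okd t by simp
        qed
        ultimately have "head t2 \<noteq> head R" by (metis disjoint_iff)
        then show "pp s' (head t2) = pp s (head t2)" using pp' by simp
      qed
      have e: "edges (inorder t) = edges (?A @ [x]) \<union> edges ?B \<union> {(x, hd ?B)}"
        using io edges_append[of "?A @ [x]" ?B] Bne by simp
      have "ppe (pp s') (head t) = ppe (pp s) (head t)" using hne pp' unfolding ppe_def by simp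
      then have t1: "tedges (pp s') (Node L x Leaf) = edges (?A @ [x]) \<union> ppe (pp s) (head t)"
        unfolding tedges_def hL by simp
      have t2: "tedges (pp s') R = edges ?B \<union> {(x, hd ?B)}"
        using pp' hR unfolding tedges_def ppe_def by simp
      have t3: "tedges (pp s) t = edges (?A @ [x]) \<union> edges ?B \<union> {(x, hd ?B)} \<union> ppe (pp s) (head t)"
        using e unfolding tedges_def by simp
      show "(\<Union>t\<in>{Node L x Leaf, R}. tedges (pp s') t) = (\<Union>t\<in>{t}. tedges (pp s) t)"
        by (simp add: t1 t2 t3 Un_ac)
      have "set (inorder t) = set ?A \<union> {x} \<union> set ?B" using io by auto
      then have st: "set_tree t = set_tree L \<union> {x} \<union> set_tree R" by simp
      have dj: "set ?A \<inter> set ?B = {}" "x \<notin> set ?B" "x \<notin> set ?A" "distinct ?A" "distinct ?B"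
        using dt unfolding io by auto
      have djs: "set_tree (Node L x Leaf) \<inter> set_tree R = {}" using dj by auto
      then show "\<forall>t1\<in>{Node L x Leaf, R}. \<forall>t2\<in>{Node L x Leaf, R}. t1 \<noteq> t2 \<longrightarrow> set_tree t1 \<inter> set_tree t2 = {}"
        by (simp add: Int_commute)
      show "(\<Union>t\<in>{Node L x Leaf, R}. set_tree t) = (\<Union>t\<in>{t}. set_tree t)"
        by (simp add: st Un_ac)
      show "\<forall>t\<in>{Node L x Leaf, R}. distinct (inorder t)" using dj by simp
    qed (use False t in simp_all)
  qed
  then have "lct_inv s' \<and> rep_parent s' = rep_parent s" using transfer[OF inv] by blast
  moreover have "trees s - {t} \<subseteq> trees s' \<and> Node L x Leaf \<in> trees s'" using tr' by blast
  ultimately show ?thesis using G' by blast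
qed

lemma step_ok:
  assumes inv: "lct_inv s" and tv: "tv \<in> trees s" and tw: "tw \<in> trees s" and ne: "tv \<noteq> tw"
    and ppw: "pp s (head tv) = Some w" and sp: "splay w tw = Node L' w R'"
    and s2: "s2 = s\<lparr> trees := (trees s - {tv, tw}) \<union> {Node L' w tv} \<union> (if R' = Leaf then {} else {R'}),
                 pp := (if R' = Leaf then pp s else (pp s)(head R' := Some w)) \<rparr>"
  shows "lct_inv s2 \<and> rep_parent s2 = rep_parent s \<and> nodes s2 = nodes s \<and>
         trees s - {tv, tw} \<subseteq> trees s2 \<and> Node L' w tv \<in> trees s2"
proof -
  have ok: "struct_ok s" using inv by (rule lct_inv_struct)
  let ?A = "inorder L'" and ?B = "inorder R'" and ?C = "inorder tv"
  have io: "inorder tw = ?A @ w # ?B" using inorder_splay[of w tw] sp by simp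
  have dw: "distinct (inorder tw)" and dv: "distinct ?C" and tvne: "tv \<noteq> Leaf"
    using ok tw tv unfolding struct_ok_def by auto
  have okd: "\<forall>t1\<in>trees s. \<forall>t2\<in>trees s. t1 \<noteq> t2 \<longrightarrow> set_tree t1 \<inter> set_tree t2 = {}"
    using ok unfolding struct_ok_def by auto
  have lf: "Leaf \<notin> trees s" using ok unfolding struct_ok_def by simp
  have djvw0: "set_tree tv \<inter> set_tree tw = {}" using okd tv tw ne by simp
  have djvw: "set ?C \<inter> set (inorder tw) = {}" using djvw0 by simp
  have Cne: "?C \<noteq> []" using tvne by simp
  have hC: "head tv = hd ?C" by (simp add: head_eq)
  have hN: "head (Node L' w tv) = head tw" using io by (simp add: head_eq hd_append)
  have eN: "edges (inorder (Node L' w tv)) = edges (?A @ [w]) \<union> edges ?C \<union> {(w, hd ?C)}"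
    using edges_append[of "?A @ [w]" ?C] Cne by simp
  have tvE: "tedges (pp s) tv = edges ?C \<union> {(w, hd ?C)}"
    using ppw hC unfolding tedges_def ppe_def by simp
  have tr': "trees s2 = (trees s - {tv, tw}) \<union> {Node L' w tv} \<union> (if R' = Leaf then {} else {R'})"
    using s2 by simp
  have pp'0: "pp s2 = (if R' = Leaf then pp s else (pp s)(head R' := Some w))"
    using s2 by simp
  have dA: "distinct ?A" "w \<notin> set ?A" "distinct ?B" "w \<notin> set ?B" "set ?A \<inter> set ?B = {}"
    using dw unfolding io by auto
  have djC: "set ?C \<inter> set ?A = {}" "w \<notin> set ?C" "set ?C \<inter> set ?B = {}"
    using djvw unfolding io by auto
  have dN: "distinct (inorder (Node L' w tv))" using dA djC dv by auto
  have stw: "set_tree tw = set_tree L' \<union> {w} \<union> set_tree R'"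
  proof -
    have "set (inorder tw) = set ?A \<union> {w} \<union> set ?B" using io by auto
    then show ?thesis by simp
  qed
  have G': "struct_ok s2 \<and> nodes s2 = nodes s \<and> G s2 = G s"
  proof (cases "R' = Leaf")
    case True
    have pp': "pp s2 = pp s" using pp'0 True by simp
    show ?thesis
    proof (rule replace[OF ok, of "{tv, tw}" "{Node L' w tv}"])
      show "trees s2 = trees s - {tv, tw} \<union> {Node L' w tv}" using tr' True by simp
      have twE: "tedges (pp s) tw = edges (?A @ [w]) \<union> ppe (pp s) (head tw)"
        using io True unfolding tedges_def by simp
      have nE: "tedges (pp s2) (Node L' w tv) = edges (?A @ [w]) \<union> edges ?C \<union> {(w, hd ?C)} \<union> ppe (pp s) (head tw)"
        unfolding tedges_def eN hN pp' by simp
      show "(\<Union>t\<in>{Node L' w tv}. tedges (pp s2) t) = (\<Union>t\<in>{tv, tw}. tedges (pp s) t)"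
        by (simp add: nE twE tvE Un_ac)
      show "(\<Union>t\<in>{Node L' w tv}. set_tree t) = (\<Union>t\<in>{tv, tw}. set_tree t)"
        using True by (simp add: stw Un_ac)
      show "\<forall>t\<in>{Node L' w tv}. distinct (inorder t)" using dN by simp
      show "\<forall>t\<in>trees s - {tv, tw}. pp s2 (head t) = pp s (head t)" using pp' by simp
      show "{tv, tw} \<subseteq> trees s" using tv tw by simp
    qed simp_all
  next
    case False
    have Bne: "?B \<noteq> []" using False by simp
    have hB: "hd ?B \<in> set ?B" using hd_in_set[OF Bne] .
    have hR: "head R' = hd ?B" by (simp add: head_eq)
    have hne: "head tw \<noteq> head R'"
      using dw io hB hR by (cases ?A) (auto simp: head_eq)
    have pp': "pp s2 = (pp s)(head R' := Some w)" using pp'0 False by simp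
    have hRw: "head R' \<in> set_tree tw" using hB hR stw by (simp flip: set_inorder)
    show ?thesis
    proof (rule replace[OF ok, of "{tv, tw}" "{Node L' w tv, R'}"])
      show "trees s2 = trees s - {tv, tw} \<union> {Node L' w tv, R'}" using tr' False by (simp add: insert_commute)
      show "\<forall>t2\<in>trees s - {tv, tw}. pp s2 (head t2) = pp s (head t2)"
      proof
        fix t2 assume t2: "t2 \<in> trees s - {tv, tw}"
        then have t2': "t2 \<in> trees s" "t2 \<noteq> tw" "t2 \<noteq> Leaf" using lf by auto
        then have "head t2 \<in> set_tree t2" by (intro head_in)
        moreover have "set_tree t2 \<inter> set_tree tw = {}" using okd tw t2' by simp
        ultimately have "head t2 \<noteq> head R'" using hRw by (metis disjoint_iff)
        then show "pp s2 (head t2) = pp s (head t2)" using pp' by simp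
      qed
      have ew: "edges (inorder tw) = edges (?A @ [w]) \<union> edges ?B \<union> {(w, hd ?B)}"
        using io edges_append[of "?A @ [w]" ?B] Bne by simp
      have twE: "tedges (pp s) tw = edges (?A @ [w]) \<union> edges ?B \<union> {(w, hd ?B)} \<union> ppe (pp s) (head tw)"
        using ew unfolding tedges_def by simp
      have "ppe (pp s2) (head tw) = ppe (pp s) (head tw)" using hne pp' unfolding ppe_def by simp
      then have nE: "tedges (pp s2) (Node L' w tv) = edges (?A @ [w]) \<union> edges ?C \<union> {(w, hd ?C)} \<union> ppe (pp s) (head tw)"
        unfolding tedges_def eN hN by simp
      have rE: "tedges (pp s2) R' = edges ?B \<union> {(w, hd ?B)}"
        using pp' hR unfolding tedges_def ppe_def by simp
      show "(\<Union>t\<in>{Node L' w tv, R'}. tedges (pp s2) t) = (\<Union>t\<in>{tv, tw}. tedges (pp s) t)"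
        by (simp add: nE twE tvE rE Un_ac insert_commute)
      show "(\<Union>t\<in>{Node L' w tv, R'}. set_tree t) = (\<Union>t\<in>{tv, tw}. set_tree t)"
        by (simp add: stw Un_ac)
      show "\<forall>t\<in>{Node L' w tv, R'}. distinct (inorder t)" using dN dA by simp
      have djs: "set_tree (Node L' w tv) \<inter> set_tree R' = {}" using dA djC by auto
      then show "\<forall>t1\<in>{Node L' w tv, R'}. \<forall>t2\<in>{Node L' w tv, R'}. t1 \<noteq> t2 \<longrightarrow> set_tree t1 \<inter> set_tree t2 = {}"
        by (simp add: Int_commute)
      show "{tv, tw} \<subseteq> trees s" using tv tw by simp
    qed (use False in simp_all)
  qed
  then have "lct_inv s2 \<and> rep_parent s2 = rep_parent s" using transfer[OF inv] by blast
  moreover have "trees s - {tv, tw} \<subseteq> trees s2 \<and> Node L' w tv \<in> trees s2" using tr' by blast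
  ultimately show ?thesis using G' by blast
qed

lemma resplay_ok:
  assumes inv: "lct_inv s" and tv: "tv \<in> trees s" and io: "inorder t' = inorder tv"
    and s': "s' = s\<lparr> trees := (trees s - {tv}) \<union> {t'} \<rparr>"
  shows "lct_inv s' \<and> rep_parent s' = rep_parent s \<and> nodes s' = nodes s"
proof -
  have ok: "struct_ok s" using inv by (rule lct_inv_struct)
  have "struct_ok s' \<and> nodes s' = nodes s \<and> G s' = G s"
  proof (rule replace[OF ok, of "{tv}" "{t'}"])
    show "trees s' = trees s - {tv} \<union> {t'}" using s' by simp
    have "pp s' = pp s" using s' by simp
    then show "(\<Union>t\<in>{t'}. tedges (pp s') t) = (\<Union>t\<in>{tv}. tedges (pp s) t)"
      using tedges_inorder[OF io] by simp
    show "\<forall>t\<in>trees s - {tv}. pp s' (head t) = pp s (head t)" using s' by simp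
    have "set_tree t' = set_tree tv" using io by (metis set_inorder)
    then show "(\<Union>t\<in>{t'}. set_tree t) = (\<Union>t\<in>{tv}. set_tree t)" by simp
    have "distinct (inorder tv)" "tv \<noteq> Leaf" using ok tv unfolding struct_ok_def by auto
    then show "\<forall>t\<in>{t'}. distinct (inorder t)" "Leaf \<notin> {t'}" using io by auto
    show "{tv} \<subseteq> trees s" using tv by simp
  qed simp_all
  then show ?thesis using transfer[OF inv] by blast
qed

lemma start_shape:
  assumes inv: "lct_inv s" and v: "v \<in> nodes s"
  shows "\<exists>L R. splay v (tree_of s v) = Node L v R \<and>
     expose_start s v = (s\<lparr> trees := (trees s - {tree_of s v}) \<union> {Node L v Leaf} \<union> (if R = Leaf then {} else {R}),
              pp := (if R = Leaf then pp s else (pp s)(head R := Some v)) \<rparr>, splay_cost v (tree_of s v) + 1)"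
proof -
  have ok: "struct_ok s" using inv by (rule lct_inv_struct)
  have vt: "v \<in> set_tree (tree_of s v)" using tree_of_in[OF ok v] by simp
  obtain L R where sp: "splay v (tree_of s v) = Node L v R" using splay_root[OF vt] by (elim exE)
  then show ?thesis unfolding expose_start_def Let_def by simp
qed

lemma start_ok:
  assumes inv: "lct_inv s" and v: "v \<in> nodes s" and st: "expose_start s v = (s1, c)"
  shows "lct_inv s1 \<and> rep_parent s1 = rep_parent s \<and> nodes s1 = nodes s \<and>
         trees s - {tree_of s v} \<subseteq> trees s1 \<and> c = splay_cost v (tree_of s v) + 1"
proof -
  have ok: "struct_ok s" using inv by (rule lct_inv_struct)
  obtain L R where sp: "splay v (tree_of s v) = Node L v R" and
    e: "expose_start s v = (s\<lparr> trees := (trees s - {tree_of s v}) \<union> {Node L v Leaf} \<union> (if R = Leaf then {} else {R}),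
              pp := (if R = Leaf then pp s else (pp s)(head R := Some v)) \<rparr>, splay_cost v (tree_of s v) + 1)"
    using start_shape[OF inv v] by blast
  have t: "tree_of s v \<in> trees s" using tree_of_in[OF ok v] by simp
  have s1: "s1 = s\<lparr> trees := (trees s - {tree_of s v}) \<union> {Node L v Leaf} \<union> (if R = Leaf then {} else {R}),
              pp := (if R = Leaf then pp s else (pp s)(head R := Some v)) \<rparr>" and c: "c = splay_cost v (tree_of s v) + 1"
    using st e by simp_all
  show ?thesis using split_ok[OF inv t sp s1] c by simp
qed

lemma wf_no_cycle: "wf r \<Longrightarrow> (a, a) \<in> r\<^sup>+ \<Longrightarrow> False"
  using wf_trancl wf_not_refl by metis

lemma step_facts:
  assumes inv: "lct_inv s" and v: "v \<in> nodes s" and tv: "tv = tree_of s v"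
    and ppw: "pp s (head tv) = Some w" and tw: "tw = tree_of s w"
  shows "tv \<in> trees s \<and> tw \<in> trees s \<and> tv \<noteq> tw \<and> w \<in> set_tree tw \<and> v \<in> set_tree tv \<and>
         (w, head tv) \<in> parent_rel s"
proof -
  have ok: "struct_ok s" using inv by (rule lct_inv_struct)
  have tv1: "tv \<in> trees s" "v \<in> set_tree tv" using tree_of_in[OF ok v] unfolding tv by simp_all
  have "\<forall>t\<in>trees s. \<forall>w. pp s (head t) = Some w \<longrightarrow> w \<in> nodes s" using inv unfolding lct_inv_def by simp
  then have wn: "w \<in> nodes s" using tv1 ppw by blast
  have tw1: "tw \<in> trees s" "w \<in> set_tree tw" using tree_of_in[OF ok wn] unfolding tw by simp_all
  have "(w, head tv) \<in> tedges (pp s) tv" using ppw unfolding tedges_def ppe_def by simp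
  then have "(w, head tv) \<in> G s" using tv1 unfolding G_def by blast
  then have pr: "(w, head tv) \<in> parent_rel s" using rep_parent_G[OF ok] unfolding parent_rel_def by simp
  have ne: "tv \<noteq> tw"
  proof
    assume "tv = tw"
    then have "w \<in> set_tree tv" using tw1 by simp
    then have "(head tv, w) \<in> (parent_rel s)\<^sup>*" by (rule head_anc[OF ok tv1(1)])
    then have cyc: "(w, w) \<in> (parent_rel s)\<^sup>+" using pr by (rule rtrancl_into_trancl2[rotated])
    have wfp: "wf (parent_rel s)" using inv unfolding lct_inv_def by simp
    show False by (rule wf_no_cycle[OF wfp cyc])
  qed
  show ?thesis by (intro conjI tv1 tw1 ne pr)
qed

lemma loop_inv:
  "expose_loop s v s' c \<Longrightarrow> lct_inv s \<Longrightarrow> v \<in> nodes s \<Longrightarrow>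
   lct_inv s' \<and> rep_parent s' = rep_parent s \<and> nodes s' = nodes s"
proof (induction rule: expose_loop.induct)
  case (loop_done tv s v)
  have ok: "struct_ok s" using loop_done.prems(1) by (rule lct_inv_struct)
  have "tv \<in> trees s" using tree_of_in[OF ok loop_done.prems(2)] loop_done.hyps(1) by simp
  then show ?case using resplay_ok[OF loop_done.prems(1)] by simp
next
  case (loop_step tv s v w tw L' x R' s2 s' c)
  note f = step_facts[OF loop_step.prems loop_step.hyps(1,2,3)]
  have wt: "w \<in> set_tree tw" using f by simp
  obtain L'' R'' where "splay w tw = Node L'' w R''" using splay_root[OF wt] by (elim exE)
  then have xw: "x = w" using loop_step.hyps(4) by simp
  have s2: "lct_inv s2 \<and> rep_parent s2 = rep_parent s \<and> nodes s2 = nodes s \<and>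
         trees s - {tv, tw} \<subseteq> trees s2 \<and> Node L' w tv \<in> trees s2"
    using step_ok[OF loop_step.prems(1), of tv tw w L' R' s2] f loop_step.hyps(2,4,5) xw by simp
  then have "lct_inv s' \<and> rep_parent s' = rep_parent s2 \<and> nodes s' = nodes s2"
    using loop_step.IH loop_step.prems(2) by simp
  then show ?case using s2 by simp
qed

lemma size_bound: "lct_inv s \<Longrightarrow> diam_le s D \<Longrightarrow> t \<in> trees s \<Longrightarrow> size t \<le> D + 1"
  by (rule nodes_G_le[OF lct_inv_struct])

lemma step_all:
  assumes inv: "lct_inv s" and v: "v \<in> nodes s" and tv: "tv = tree_of s v"
    and ppw: "pp s (head tv) = Some w" and tw: "tw = tree_of s w" and sp: "splay w tw = Node L' x R'"
    and s2: "s2 = s\<lparr> trees := (trees s - {tv, tw}) \<union> {Node L' x tv} \<union> (if R' = Leaf then {} else {R'}),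
                 pp := (if R' = Leaf then pp s else (pp s)(head R' := Some x)) \<rparr>"
  shows "lct_inv s2 \<and> rep_parent s2 = rep_parent s \<and> nodes s2 = nodes s \<and>
         trees s - {tv, tw} \<subseteq> trees s2 \<and> tree_of s2 v = Node L' x tv \<and> x = w \<and>
         tv \<in> trees s \<and> tw \<in> trees s \<and> tv \<noteq> tw \<and> w \<in> set_tree tw \<and> v \<in> set_tree tv \<and>
         (w, head tv) \<in> parent_rel s"
proof -
  note f = step_facts[OF inv v tv ppw tw]
  have wt: "w \<in> set_tree tw" using f by simp
  obtain L'' R'' where "splay w tw = Node L'' w R''" using splay_root[OF wt] by (elim exE)
  then have xw: "x = w" using sp by simp
  have s2': "lct_inv s2 \<and> rep_parent s2 = rep_parent s \<and> nodes s2 = nodes s \<and>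
         trees s - {tv, tw} \<subseteq> trees s2 \<and> Node L' w tv \<in> trees s2"
    using step_ok[OF inv, of tv tw w L' R' s2] f ppw sp s2 xw by simp
  have ok2: "struct_ok s2" using s2' by (simp add: lct_inv_struct)
  have "v \<in> set_tree (Node L' w tv)" using f by simp
  then have "tree_of s2 v = Node L' w tv" using tree_of_eq[OF ok2] s2' by simp
  then show ?thesis using s2' f xw by simp
qed

lemma loop_cost:
  "expose_loop s v s' c \<Longrightarrow> lct_inv s \<Longrightarrow> diam_le s D \<Longrightarrow> v \<in> nodes s \<Longrightarrow>
   c \<le> (D + 3) * (D + 2 - size (tree_of s v))"
proof (induction rule: expose_loop.induct)
  case (loop_done tv s v)
  have ok: "struct_ok s" using loop_done.prems(1) by (rule lct_inv_struct)
  have t: "tv \<in> trees s" using tree_of_in[OF ok loop_done.prems(3)] loop_done.hyps(1) by simp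
  have sz: "size tv \<le> D + 1" using size_bound[OF loop_done.prems(1,2) t] .
  have "splay_cost v tv \<le> D + 2" using node_depth_le[of v tv] sz unfolding splay_cost_def by simp
  moreover have "1 \<le> D + 2 - size tv" using sz by simp
  moreover have "D + 3 \<le> (D + 3) * (D + 2 - size tv)"
    using mult_le_mono2[OF \<open>1 \<le> D + 2 - size tv\<close>, of "D + 3"] by simp
  ultimately have "splay_cost v tv \<le> (D + 3) * (D + 2 - size tv)" by linarith
  then show ?case using loop_done.hyps(1) by simp
next
  case (loop_step tv s v w tw L' x R' s2 s' c)
  note a = step_all[OF loop_step.prems(1,3) loop_step.hyps(1-5)]
  have d2: "diam_le s2 D" using diam_eq[of s2 s D] a loop_step.prems(2) by simp
  have v2: "v \<in> nodes s2" using a loop_step.prems(3) by simp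
  have IH: "c \<le> (D + 3) * (D + 2 - size (Node L' x tv))"
    using loop_step.IH a d2 v2 by simp
  have ok2: "struct_ok s2" using a by (simp add: lct_inv_struct)
  have "tree_of s2 v \<in> trees s2" using tree_of_in[OF ok2 v2] by simp
  have inv2: "lct_inv s2" and t2v: "tree_of s2 v = Node L' x tv" using a by simp_all
  have "size (tree_of s2 v) \<le> D + 1" by (rule size_bound[OF inv2 d2 \<open>tree_of s2 v \<in> trees s2\<close>])
  then have b: "size (Node L' x tv) \<le> D + 1" unfolding t2v .
  have tw: "size tw \<le> D + 1" using size_bound[OF loop_step.prems(1,2)] a by simp
  have sc: "splay_cost w tw + 1 \<le> D + 3" using node_depth_le[of w tw] tw unfolding splay_cost_def by simp
  have tvv: "tv = tree_of s v" using loop_step.hyps(1) .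
  define A where "A = size tv"
  define B where "B = size (Node L' x tv)"
  have AB: "A + 1 \<le> B" "B \<le> D + 1" unfolding A_def B_def using b by simp_all
  have "c + (splay_cost w tw + 1) \<le> (D + 3) * (D + 2 - B) + (D + 3)" using IH sc unfolding B_def by simp
  also have "\<dots> = (D + 3) * (D + 3 - B)"
  proof -
    have e: "D + 3 - B = (D + 2 - B) + 1" using AB by simp
    show ?thesis by (simp only: e distrib_left mult_1_right)
  qed
  also have "\<dots> \<le> (D + 3) * (D + 2 - A)" using AB by (intro mult_le_mono2) simp
  finally show ?case unfolding A_def tvv[symmetric] by simp
qed

lemma loop_exists:
  "lct_inv s \<Longrightarrow> diam_le s D \<Longrightarrow> v \<in> nodes s \<Longrightarrow> \<exists>s' c. expose_loop s v s' c"
proof (induction "D + 1 - size (tree_of s v)" arbitrary: s rule: less_induct)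
  case less
  define tv where "tv = tree_of s v"
  show ?case
  proof (cases "pp s (head tv)")
    case None
    show ?thesis using expose_loop.loop_done[OF tv_def None] by blast
  next
    case (Some w)
    define tw where "tw = tree_of s w"
    note f = step_facts[OF less.prems(1,3) tv_def Some tw_def]
    have wt: "w \<in> set_tree tw" using f by simp
    obtain L' R' where sp: "splay w tw = Node L' w R'" using splay_root[OF wt] by (elim exE)
    define s2 where "s2 = s\<lparr> trees := (trees s - {tv, tw}) \<union> {Node L' w tv} \<union> (if R' = Leaf then {} else {R'}),
                 pp := (if R' = Leaf then pp s else (pp s)(head R' := Some w)) \<rparr>"
    note a = step_all[OF less.prems(1,3) tv_def Some tw_def sp s2_def]
    have inv2: "lct_inv s2" and t2v: "tree_of s2 v = Node L' w tv" using a by simp_all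
    have d2: "diam_le s2 D" using diam_eq[of s2 s D] a less.prems(2) by simp
    have v2: "v \<in> nodes s2" using a less.prems(3) by simp
    have ok2: "struct_ok s2" using inv2 by (rule lct_inv_struct)
    have "tree_of s2 v \<in> trees s2" using tree_of_in[OF ok2 v2] by simp
    then have "size (tree_of s2 v) \<le> D + 1" by (rule size_bound[OF inv2 d2])
    then have "D + 1 - size (tree_of s2 v) < D + 1 - size (tree_of s v)"
      unfolding t2v tv_def[symmetric] by simp
    then obtain s' c where "expose_loop s2 v s' c" using less.hyps[OF _ inv2 d2 v2] by blast
    then show ?thesis using expose_loop.loop_step[OF tv_def Some tw_def sp s2_def] by blast
  qed
qed

lemma loop_keeps:
  "expose_loop s z s' c \<Longrightarrow> lct_inv s \<Longrightarrow> z \<in> nodes s \<Longrightarrow> T0 \<in> trees s \<Longrightarrow>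
   (\<forall>y\<in>set_tree T0. (y, z) \<notin> (parent_rel s)\<^sup>*) \<Longrightarrow> T0 \<in> trees s'"
proof (induction rule: expose_loop.induct)
  case (loop_done tv s v)
  have ok: "struct_ok s" using loop_done.prems(1) by (rule lct_inv_struct)
  have "v \<in> set_tree tv" using tree_of_in[OF ok loop_done.prems(2)] loop_done.hyps(1) by simp
  then have "T0 \<noteq> tv" using loop_done.prems(4) by auto
  then show ?case using loop_done.prems(3) by simp
next
  case (loop_step tv s v w tw L' x R' s2 s' c)
  have ok: "struct_ok s" using loop_step.prems(1) by (rule lct_inv_struct)
  note a = step_all[OF loop_step.prems(1,2) loop_step.hyps(1-5)]
  have vt: "v \<in> set_tree tv" and tvs: "tv \<in> trees s" and wt: "w \<in> set_tree tw"
    and pr: "(w, head tv) \<in> parent_rel s" using a by simp_all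
  have n1: "T0 \<noteq> tv" using vt loop_step.prems(4) by auto
  have "(head tv, v) \<in> (parent_rel s)\<^sup>*" by (rule head_anc[OF ok tvs vt])
  then have "(w, v) \<in> (parent_rel s)\<^sup>*" using pr by (rule converse_rtrancl_into_rtrancl[rotated])
  then have n2: "T0 \<noteq> tw" using wt loop_step.prems(4) by auto
  have "T0 \<in> trees s - {tv, tw}" using n1 n2 loop_step.prems(3) by simp
  then have T2: "T0 \<in> trees s2" using a by blast
  have "rep_parent s2 = rep_parent s" using a by simp
  then have pr2: "parent_rel s2 = parent_rel s" by (rule parent_rel_eq)
  have inv2: "lct_inv s2" and v2: "v \<in> nodes s2" using a loop_step.prems(2) by simp_all
  show ?case using loop_step.IH[OF inv2 v2 T2] loop_step.prems(4) pr2 by simp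
qed

lemma expose_unfold:
  assumes "expose s v s' c"
  obtains s1 c1 c2 where "expose_start s v = (s1, c1)" "expose_loop s1 v s' c2" "c = c1 + c2"
  using assms unfolding expose_def by (metis prod.collapse)

lemma expose_ok:
  assumes e: "expose s v s' c" and inv: "lct_inv s" and d: "diam_le s D" and v: "v \<in> nodes s"
  shows "lct_inv s' \<and> rep_parent s' = rep_parent s \<and> nodes s' = nodes s \<and> c \<le> 6 * (D + 1)^2"
proof -
  obtain s1 c1 c2 where st: "expose_start s v = (s1, c1)" and l: "expose_loop s1 v s' c2" and c: "c = c1 + c2"
    using e by (rule expose_unfold)
  have ok: "struct_ok s" using inv by (rule lct_inv_struct)
  note a = start_ok[OF inv v st]
  have inv1: "lct_inv s1" and v1: "v \<in> nodes s1" and rp1: "rep_parent s1 = rep_parent s"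
    using a v by simp_all
  have d1: "diam_le s1 D" using diam_eq[OF rp1] d by simp
  have "tree_of s v \<in> trees s" using tree_of_in[OF ok v] by simp
  then have "size (tree_of s v) \<le> D + 1" by (rule size_bound[OF inv d])
  then have c1: "c1 \<le> D + 3" using a node_depth_le[of v "tree_of s v"] unfolding splay_cost_def by simp
  have c2: "c2 \<le> (D + 3) * (D + 2 - size (tree_of s1 v))" by (rule loop_cost[OF l inv1 d1 v1])
  have ok1: "struct_ok s1" using inv1 by (rule lct_inv_struct)
  have "v \<in> set_tree (tree_of s1 v)" using tree_of_in[OF ok1 v1] by simp
  then have "tree_of s1 v \<noteq> Leaf" by auto
  then have "1 \<le> size (tree_of s1 v)" by (cases "tree_of s1 v") auto
  then have "D + 2 - size (tree_of s1 v) \<le> D + 1" by simp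
  then have "(D + 3) * (D + 2 - size (tree_of s1 v)) \<le> (D + 3) * (D + 1)" by (rule mult_le_mono2)
  then have "c \<le> (D + 3) + (D + 3) * (D + 1)" using c c1 c2 by linarith
  also have "\<dots> \<le> 6 * (D + 1)^2" by (simp add: power2_eq_square algebra_simps)
  finally have cb: "c \<le> 6 * (D + 1)^2" .
  show ?thesis using loop_inv[OF l inv1 v1] a cb by simp
qed

lemma expose_exists:
  assumes inv: "lct_inv s" and d: "diam_le s D" and v: "v \<in> nodes s"
  shows "\<exists>s' c. expose s v s' c"
proof -
  obtain s1 c1 where st: "expose_start s v = (s1, c1)" by (cases "expose_start s v") auto
  note a = start_ok[OF inv v st]
  have inv1: "lct_inv s1" and v1: "v \<in> nodes s1" and rp1: "rep_parent s1 = rep_parent s"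
    using a v by simp_all
  have d1: "diam_le s1 D" using diam_eq[OF rp1] d by simp
  obtain s' c2 where "expose_loop s1 v s' c2" using loop_exists[OF inv1 d1 v1] by blast
  then have "expose s v s' (c1 + c2)" unfolding expose_def st by simp
  then show ?thesis by blast
qed

lemma expose_keeps:
  assumes e: "expose s z s' c" and inv: "lct_inv s" and z: "z \<in> nodes s" and T0: "T0 \<in> trees s"
    and na: "\<forall>y\<in>set_tree T0. (y, z) \<notin> (parent_rel s)\<^sup>*"
  shows "T0 \<in> trees s'"
proof -
  obtain s1 c1 c2 where st: "expose_start s z = (s1, c1)" and l: "expose_loop s1 z s' c2"
    using e by (rule expose_unfold)
  have ok: "struct_ok s" using inv by (rule lct_inv_struct)
  note a = start_ok[OF inv z st]
  have inv1: "lct_inv s1" and z1: "z \<in> nodes s1" and rp1: "rep_parent s1 = rep_parent s"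
    using a z by simp_all
  have "z \<in> set_tree (tree_of s z)" using tree_of_in[OF ok z] by simp
  then have "T0 \<noteq> tree_of s z" using na by auto
  then have "T0 \<in> trees s - {tree_of s z}" using T0 by simp
  then have T1: "T0 \<in> trees s1" using a by blast
  have "parent_rel s1 = parent_rel s" using parent_rel_eq[OF rp1] .
  then show ?thesis using loop_keeps[OF l inv1 z1 T1] na by simp
qed

lemma expose_root:
  assumes e: "expose s v s' c" and inv: "lct_inv s" and v: "v \<in> nodes s" and rp: "rep_parent s v = None"
  shows "Node Leaf v Leaf \<in> trees s'"
proof -
  have ok: "struct_ok s" using inv by (rule lct_inv_struct)
  define t where "t = tree_of s v"
  have t: "t \<in> trees s" "v \<in> set_tree t" using tree_of_in[OF ok v] unfolding t_def by simp_all
  have pn: "pred_in (inorder t) v = None \<and> pp s v = None"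
    using rp v unfolding rep_parent_def t_def[symmetric] by (cases "pred_in (inorder t) v") simp_all
  have hv: "v = hd (inorder t)" using pred_in_None[of v "inorder t"] pn t by simp
  obtain L R where sp: "splay v t = Node L v R" and
    e0: "expose_start s v = (s\<lparr> trees := (trees s - {t}) \<union> {Node L v Leaf} \<union> (if R = Leaf then {} else {R}),
              pp := (if R = Leaf then pp s else (pp s)(head R := Some v)) \<rparr>, splay_cost v t + 1)"
    using start_shape[OF inv v] unfolding t_def by blast
  have io: "inorder t = inorder L @ v # inorder R" using inorder_splay[of v t] sp by simp
  have dt: "distinct (inorder t)" using ok t unfolding struct_ok_def by auto
  have "inorder L = []"
  proof (cases "inorder L")
    case (Cons a l)
    then have "a = v" using hv io by simp
    then show ?thesis using dt io Cons by simp
  qed simp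
  then have L: "L = Leaf" by simp
  obtain s1 c1 c2 where st: "expose_start s v = (s1, c1)" and l: "expose_loop s1 v s' c2"
    using e by (rule expose_unfold)
  have s1: "s1 = s\<lparr> trees := (trees s - {t}) \<union> {Node L v Leaf} \<union> (if R = Leaf then {} else {R}),
              pp := (if R = Leaf then pp s else (pp s)(head R := Some v)) \<rparr>" using st e0 by simp
  note a = split_ok[OF inv t(1) sp s1]
  have inv1: "lct_inv s1" and T1: "Node Leaf v Leaf \<in> trees s1" using a L by simp_all
  have ok1: "struct_ok s1" using inv1 by (rule lct_inv_struct)
  have pp1: "pp s1 v = None"
  proof (cases "R = Leaf")
    case True then show ?thesis using s1 pn by simp
  next
    case False
    have "head R \<in> set_tree R" using head_in[OF False] .
    moreover have "v \<notin> set_tree R" using dt io by (simp flip: set_inorder)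
    ultimately have "head R \<noteq> v" by blast
    then show ?thesis using s1 pn False by simp
  qed
  have tv1: "tree_of s1 v = Node Leaf v Leaf" using tree_of_eq[OF ok1 T1] by simp
  have hd1: "head (Node Leaf v Leaf) = v" unfolding head_def by simp
  show ?thesis using l
  proof (cases rule: expose_loop.cases)
    case (loop_done tv)
    then have "tv = Node Leaf v Leaf" using tv1 by simp
    then show ?thesis using loop_done(1) T1 by simp
  next
    case (loop_step tv w tw L' x R' s2 c)
    then have "tv = Node Leaf v Leaf" using tv1 by simp
    then show ?thesis using loop_step(3) pp1 hd1 by simp
  qed
qed

theorem theoremB1:
  shows "\<exists>K::nat. \<forall>(s::'a lct) op D.
           lct_inv s \<and> op_pre s op \<and> diam_le s D \<longrightarrow>
             (\<exists>s' r c. lct_step s op s' r c) \<and>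
             (\<forall>s' r c. lct_step s op s' r c \<longrightarrow> c \<le> K * (D + 1)^2)"
proof (rule exI[of _ 20], intro allI impI, rule conjI)
  fix s :: "'a lct" and op D
  assume h: "lct_inv s \<and> op_pre s op \<and> diam_le s D"
  then have inv: "lct_inv s" and pre: "op_pre s op" and d: "diam_le s D" by simp_all
  have ok: "struct_ok s" using inv by (rule lct_inv_struct)
  have sq: "1 \<le> (D + 1)^2" by simp
  show "\<exists>s' r c. lct_step s op s' r c"
  proof (cases op)
    case (Link v w)
    then have v: "v \<in> nodes s" and w: "w \<in> nodes s" and rv: "rep_parent s v = None"
      and vw: "(v, w) \<notin> (parent_rel s)\<^sup>*" using pre by simp_all
    obtain s1 c1 where e1: "expose s v s1 c1" using expose_exists[OF inv d v] by blast
    note a1 = expose_ok[OF e1 inv d v]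
    have inv1: "lct_inv s1" and rp1: "rep_parent s1 = rep_parent s" and n1: "nodes s1 = nodes s"
      using a1 by simp_all
    have d1: "diam_le s1 D" using diam_eq[OF rp1] d by simp
    have w1: "w \<in> nodes s1" using w n1 by simp
    have T1: "Node Leaf v Leaf \<in> trees s1" by (rule expose_root[OF e1 inv v rv])
    obtain s2 c2 where e2: "expose s1 w s2 c2" using expose_exists[OF inv1 d1 w1] by blast
    have "\<forall>y\<in>set_tree (Node Leaf v Leaf). (y, w) \<notin> (parent_rel s1)\<^sup>*"
      using vw parent_rel_eq[OF rp1] by simp
    then have T2: "Node Leaf v Leaf \<in> trees s2" by (rule expose_keeps[OF e2 inv1 w1 T1])
    have inv2: "lct_inv s2" using expose_ok[OF e2 inv1 d1 w1] by simp
    have "tree_of s2 v = Node Leaf v Leaf" using tree_of_eq[OF lct_inv_struct[OF inv2] T2] by simp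
    then show ?thesis unfolding Link using lct_step.link[OF e1 e2] by blast
  next
    case (Cut v)
    then have v: "v \<in> nodes s" using pre by simp
    obtain s1 c1 where e1: "expose s v s1 c1" using expose_exists[OF inv d v] by blast
    have inv1: "lct_inv s1" and n1: "nodes s1 = nodes s" using expose_ok[OF e1 inv d v] by simp_all
    have "v \<in> set_tree (tree_of s1 v)" using tree_of_in[OF lct_inv_struct[OF inv1]] v n1 by simp
    then obtain L x R where "tree_of s1 v = Node L x R" by (cases "tree_of s1 v") auto
    then show ?thesis unfolding Cut using lct_step.cut[OF e1] by blast
  next
    case (FindRoot v)
    then have v: "v \<in> nodes s" using pre by simp
    obtain s1 c1 where e1: "expose s v s1 c1" using expose_exists[OF inv d v] by blast
    then show ?thesis unfolding FindRoot using lct_step.findroot[OF e1 refl refl refl] by blast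
  qed
  show "\<forall>s' r c. lct_step s op s' r c \<longrightarrow> c \<le> 20 * (D + 1)^2"
  proof (intro allI impI)
    fix s' r c assume step: "lct_step s op s' r c"
    show "c \<le> 20 * (D + 1)^2"
      using step
    proof (cases rule: lct_step.cases)
      case (link v s1 c1 w s2 c2 x Rv)
      have e1: "expose s v s1 c1" and e2: "expose s1 w s2 c2" and ce: "c = c1 + c2 + 1"
        and opv: "op = Link v w" using link by simp_all
      have v: "v \<in> nodes s" and w: "w \<in> nodes s" using pre opv by simp_all
      note a1 = expose_ok[OF e1 inv d v]
      have inv1: "lct_inv s1" and rp1: "rep_parent s1 = rep_parent s" and n1: "nodes s1 = nodes s"
        and cb1: "c1 \<le> 6 * (D + 1)^2" using a1 by simp_all
      have d1: "diam_le s1 D" using diam_eq[OF rp1] d by simp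
      have w1: "w \<in> nodes s1" using w n1 by simp
      have cb2: "c2 \<le> 6 * (D + 1)^2" using expose_ok[OF e2 inv1 d1 w1] by simp
      show ?thesis using ce cb1 cb2 sq by linarith
    next
      case (cut v s1 c1 L x R)
      have e1: "expose s v s1 c1" and ce: "c = c1 + 1"
        and opv: "op = Cut v" using cut by simp_all
      have v: "v \<in> nodes s" using pre opv by simp
      have "c1 \<le> 6 * (D + 1)^2" using expose_ok[OF e1 inv d v] by simp
      then show ?thesis using ce sq by linarith
    next
      case (findroot v s1 c1 tv rr)
      have e1: "expose s v s1 c1" and ce: "c = c1 + node_depth rr tv + 1 + splay_cost rr tv"
        and opv: "op = FindRoot v" and tvd: "tv = tree_of s1 v" using findroot by simp_all
      have v: "v \<in> nodes s" using pre opv by simp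
      note a1 = expose_ok[OF e1 inv d v]
      have inv1: "lct_inv s1" and rp1: "rep_parent s1 = rep_parent s" and n1: "nodes s1 = nodes s"
        and cb1: "c1 \<le> 6 * (D + 1)^2" using a1 by simp_all
      have d1: "diam_le s1 D" using diam_eq[OF rp1] d by simp
      have "tree_of s1 v \<in> trees s1" using tree_of_in[OF lct_inv_struct[OF inv1]] v n1 by simp
      then have sz: "size tv \<le> D + 1" using size_bound[OF inv1 d1] tvd by simp
      have nd: "node_depth rr tv \<le> D + 1" using node_depth_le[of rr tv] sz by simp
      have "D + 1 \<le> (D + 1)^2" by (simp add: power2_eq_square)
      then show ?thesis using ce cb1 nd sq unfolding splay_cost_def by linarith
    qed
  qed
qed

end
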